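(* Let $\mathcal{H}$ have dimension $D$ (finite or countably infinite), let $\hat H,\hat H'$ be self-adjoint with orthonormal eigenbases $\{|E_n\rangle\}$, $\{|E'_n\rangle\}$ and eigenvalues $\{E_n\},\{E'_n\}$ satisfying: (A) both spectra are non-degenerate; (B) if $E_k-E_l=E_m-E_n\ne0$ then $k=m$, $l=n$, and likewise for $\{E'_n\}$. Let $\hat\rho^0$ be a density operator, $\hat V$ unitary, $\hbar>0$, $\rho^0_{kl}=\langle E_k|\hat\rho^0|E_l\rangle$, $U_{mn}=\langle E'_m|\hat V|E_n\rangle$, $\rho'_{nn}(\tau)=\sum_{k,l}U_{nk}U_{nl}^*e^{-\mathrm{i}(E_k-E_l)\tau/\hbar}\rho^0_{kl}$, $\mu_n=\sum_k|U_{nk}|^2\rho^0_{kk}$, and $$\nu_{mn}=\sum_{k\neq l}U_{mk}U_{ml}^*U_{nk}^*U_{nl}|\rho^0_{kl}|^2 .$$ Then for all $m,n$, $$\overline{\rho'_{nn}(\tau)}=\mu_n,\qquad \overline{\rho'_{mm}(\tau)\rho'_{nn}(\tau)}=\mu_m\mu_n+\nu_{mn},$$ where $\overline{F(\tau)}=\lim_{T\to\infty}T^{-1}\int_0^TF(\tau)\,d\tau$. *)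

theory Defs
  imports "HOL-Analysis.Analysis"
begin

text \<open>Everything is written in coordinates: the Hilbert space of dimension D
(finite or countably infinite) is l2 over a countable index type 'i, the
eigenbasis of H is indexed by 'i, and so is the eigenbasis of H'.\<close>

definition nondegenerate :: "('i \<Rightarrow> real) \<Rightarrow> bool" where
  "nondegenerate E \<longleftrightarrow> inj E"

definition nondegenerate_gaps :: "('i \<Rightarrow> real) \<Rightarrow> bool" where
  "nondegenerate_gaps E \<longleftrightarrow>
     (\<forall>k l m n. E k - E l = E m - E n \<and> E k - E l \<noteq> 0 \<longrightarrow> k = m \<and> l = n)"

definition density_matrix :: "('i \<Rightarrow> 'i \<Rightarrow> complex) \<Rightarrow> bool" where
  "density_matrix \<rho> \<longleftrightarrow>
     (\<forall>k l. \<rho> k l = cnj (\<rho> l k)) \<and>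
     (\<forall>F x. finite F \<longrightarrow>
        Im (\<Sum>k\<in>F. \<Sum>l\<in>F. cnj (x k) * \<rho> k l * x l) = 0 \<and>
        Re (\<Sum>k\<in>F. \<Sum>l\<in>F. cnj (x k) * \<rho> k l * x l) \<ge> 0) \<and>
     ((\<lambda>k. \<rho> k k) has_sum 1) UNIV"

text \<open>Matrix of a unitary operator between two orthonormal bases:
orthonormal columns (isometry) and orthonormal rows (co-isometry).\<close>
definition unitary_matrix :: "('i \<Rightarrow> 'i \<Rightarrow> complex) \<Rightarrow> bool" where
  "unitary_matrix U \<longleftrightarrow>
     (\<forall>k l. ((\<lambda>m. cnj (U m k) * U m l) has_sum (if k = l then 1 else 0)) UNIV) \<and>
     (\<forall>m n. ((\<lambda>k. U m k * cnj (U n k)) has_sum (if m = n then 1 else 0)) UNIV)"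

definition has_time_average :: "(real \<Rightarrow> complex) \<Rightarrow> complex \<Rightarrow> bool" where
  "has_time_average F a \<longleftrightarrow>
     (\<forall>T>0. F integrable_on {0..T}) \<and>
     ((\<lambda>T. integral {0..T} F / complex_of_real T) \<longlongrightarrow> a) at_top"

definition rho_evol :: "('i \<Rightarrow> 'i \<Rightarrow> complex) \<Rightarrow> ('i \<Rightarrow> real) \<Rightarrow> real \<Rightarrow>
    ('i \<Rightarrow> 'i \<Rightarrow> complex) \<Rightarrow> 'i \<Rightarrow> real \<Rightarrow> complex" where
  "rho_evol U E hbar \<rho> n \<tau> =
     (\<Sum>\<^sub>\<infinity>(k, l)\<in>UNIV. U n k * cnj (U n l)
        * exp (- \<i> * complex_of_real ((E k - E l) * \<tau> / hbar)) * \<rho> k l)"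

definition mu :: "('i \<Rightarrow> 'i \<Rightarrow> complex) \<Rightarrow> ('i \<Rightarrow> 'i \<Rightarrow> complex) \<Rightarrow> 'i \<Rightarrow> complex" where
  "mu U \<rho> n = (\<Sum>\<^sub>\<infinity>k\<in>UNIV. complex_of_real ((cmod (U n k))\<^sup>2) * \<rho> k k)"

definition nu :: "('i \<Rightarrow> 'i \<Rightarrow> complex) \<Rightarrow> ('i \<Rightarrow> 'i \<Rightarrow> complex) \<Rightarrow> 'i \<Rightarrow> 'i \<Rightarrow> complex" where
  "nu U \<rho> m n = (\<Sum>\<^sub>\<infinity>(k, l)\<in>{(k, l). k \<noteq> l}.
      U m k * cnj (U m l) * cnj (U n k) * U n l * complex_of_real ((cmod (\<rho> k l))\<^sup>2))"

end

theory Submission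
  imports Defs
begin

lemma exp_integral:
  fixes w T :: real
  assumes "0 \<le> T"
  shows "((\<lambda>t. exp (-\<i> * complex_of_real (w * t))) has_integral
           (if w = 0 then complex_of_real T
            else (exp (-\<i> * complex_of_real (w * T)) - 1) / (-\<i> * complex_of_real w))) {0..T}"
proof (cases "w = 0")
  case True
  then show ?thesis using has_integral_const_real[of "1::complex" 0 T] assms by (simp add: scaleR_conv_of_real)
next
  case False
  let ?g = "\<lambda>t. exp (-\<i> * complex_of_real (w * t)) / (-\<i> * complex_of_real w)"
  have d: "(?g has_vector_derivative exp (-\<i> * complex_of_real (w * t))) (at t within {0..T})" for t
  proof -
    have "((\<lambda>t. exp (-\<i> * complex_of_real (w * t))) has_vector_derivative
            exp (-\<i> * complex_of_real (w * t)) * (-\<i> * complex_of_real w)) (at t within {0..T})"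
      by (rule has_vector_derivative_real_field derivative_eq_intros refl | simp)+
    then have "(?g has_vector_derivative
            exp (-\<i> * complex_of_real (w * t)) * (-\<i> * complex_of_real w) / (-\<i> * complex_of_real w)) (at t within {0..T})"
      by (intro has_vector_derivative_divide) 
    then show ?thesis using False by simp
  qed
  have "((\<lambda>t. exp (-\<i> * complex_of_real (w * t))) has_integral (?g T - ?g 0)) {0..T}"
    by (rule fundamental_theorem_of_calculus[OF assms]) (use d in auto)
  then show ?thesis using False by (simp add: diff_divide_distrib)
qed

lemma exp_avg:
  fixes w :: real
  shows "((\<lambda>T. integral {0..T} (\<lambda>t. exp (-\<i> * complex_of_real (w * t))) / complex_of_real T)
           \<longlongrightarrow> (if w = 0 then 1 else 0)) at_top"
proof (cases "w = 0")
  case True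
  have "eventually (\<lambda>T. integral {0..T} (\<lambda>t. exp (-\<i> * complex_of_real (w * t))) / complex_of_real T = 1) at_top"
    using eventually_gt_at_top[of "0::real"]
  proof eventually_elim
    case (elim T)
    then show ?case using exp_integral[of T w] True by (simp add: integral_unique scaleR_conv_of_real)
  qed
  then show ?thesis using True by (simp add: tendsto_eventually)
next
  case False
  have "eventually (\<lambda>T. norm (integral {0..T} (\<lambda>t. exp (-\<i> * complex_of_real (w * t))) / complex_of_real T)
          \<le> (2 / \<bar>w\<bar>) * inverse T) at_top"
    using eventually_gt_at_top[of "0::real"]
  proof eventually_elim
    case (elim T)
    have i: "integral {0..T} (\<lambda>t. exp (-\<i> * complex_of_real (w * t))) =
       (exp (-\<i> * complex_of_real (w * T)) - 1) / (-\<i> * complex_of_real w)"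
      using exp_integral[of T w] False elim by (simp add: integral_unique)
    have n1: "norm (exp (-\<i> * complex_of_real (w * T))) = 1"
      by (simp add: norm_exp_eq_Re)
    have "norm (exp (-\<i> * complex_of_real (w * T)) - 1) \<le> 2"
      using norm_triangle_ineq4[of "exp (-\<i> * complex_of_real (w * T))" 1] n1 by simp
    then have "norm (integral {0..T} (\<lambda>t. exp (-\<i> * complex_of_real (w * t)))) \<le> 2 / \<bar>w\<bar>"
      unfolding i using False by (simp add: norm_divide norm_mult divide_right_mono)
    then show ?case using elim
      by (simp add: norm_divide divide_right_mono field_simps)
  qed
  moreover have "((\<lambda>T. (2 / \<bar>w\<bar>) * inverse T) \<longlongrightarrow> 0) at_top"
    by (intro tendsto_mult_right_zero tendsto_inverse_0_at_top filterlim_ident)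
  ultimately show ?thesis using False
    by (simp add: Lim_null_comparison)
qed

lemma avg_general:
  fixes c :: "'a \<Rightarrow> complex" and w :: "'a \<Rightarrow> real"
  assumes summ: "(\<lambda>a. norm (c a)) summable_on UNIV"
  shows "has_time_average (\<lambda>t. \<Sum>\<^sub>\<infinity>a. c a * exp (-\<i> * complex_of_real (w a * t)))
           (\<Sum>\<^sub>\<infinity>a\<in>{a. w a = 0}. c a)"
proof -
  define e where "e a t = exp (-\<i> * complex_of_real (w a * t))" for a t
  define F where "F t = (\<Sum>\<^sub>\<infinity>a. c a * e a t)" for t
  define Z where "Z = {a. w a = 0}"
  define L where "L = (\<Sum>\<^sub>\<infinity>a\<in>Z. c a)"
  define r where "r S = (\<Sum>\<^sub>\<infinity>a\<in>-S. norm (c a))" for S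
  have ne: "norm (e a t) = 1" for a t
    by (simp add: e_def norm_exp_eq_Re)
  have sumA: "(\<lambda>a. norm (c a)) summable_on A" for A
    using summable_on_subset_banach[OF summ] by blast
  have abs_ce: "(\<lambda>a. norm (c a * e a t)) summable_on A" for t A
    using sumA[of A] by (simp add: norm_mult ne)
  have sum_ce: "(\<lambda>a. c a * e a t) summable_on A" for t A
    by (rule abs_summable_summable[OF abs_ce])
  have sum_c: "c summable_on A" for A
    by (rule abs_summable_summable) (use sumA in simp)
  have tail: "norm (F t - (\<Sum>a\<in>S. c a * e a t)) \<le> r S" if "finite S" for S t
  proof -
    have "F t = (\<Sum>\<^sub>\<infinity>a\<in>S \<union> -S. c a * e a t)" by (simp add: F_def)
    also have "\<dots> = (\<Sum>\<^sub>\<infinity>a\<in>S. c a * e a t) + (\<Sum>\<^sub>\<infinity>a\<in>-S. c a * e a t)"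
      by (rule infsum_Un_disjoint) (auto intro: sum_ce)
    also have "(\<Sum>\<^sub>\<infinity>a\<in>S. c a * e a t) = (\<Sum>a\<in>S. c a * e a t)"
      using that by simp
    finally have "F t - (\<Sum>a\<in>S. c a * e a t) = (\<Sum>\<^sub>\<infinity>a\<in>-S. c a * e a t)" by simp
    moreover have "norm (\<Sum>\<^sub>\<infinity>a\<in>-S. c a * e a t) \<le> (\<Sum>\<^sub>\<infinity>a\<in>-S. norm (c a * e a t))"
      by (rule norm_infsum_bound[OF abs_ce])
    ultimately show ?thesis by (simp add: r_def norm_mult ne)
  qed
  have small: "\<exists>S. finite S \<and> r S < \<epsilon>" if "\<epsilon> > 0" for \<epsilon>
  proof -
    define N where "N = (\<Sum>\<^sub>\<infinity>a. norm (c a))"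
    have "((\<lambda>a. norm (c a)) has_sum N) UNIV" using summ by (simp add: N_def)
    then have "(sum (\<lambda>a. norm (c a)) \<longlongrightarrow> N) (finite_subsets_at_top UNIV)"
      by (simp add: has_sum_def)
    then have "eventually (\<lambda>S. dist (sum (\<lambda>a. norm (c a)) S) N < \<epsilon>) (finite_subsets_at_top UNIV)"
      using that tendsto_iff by blast
    then obtain S where S: "finite S" "dist (sum (\<lambda>a. norm (c a)) S) N < \<epsilon>"
      unfolding eventually_finite_subsets_at_top by blast
    have "r S = N - sum (\<lambda>a. norm (c a)) S"
      unfolding r_def N_def Compl_eq_Diff_UNIV
      by (subst infsum_Diff) (use sumA S in auto)
    with S show ?thesis by (auto simp: dist_real_def)
  qed
  have Ltail: "norm (L - (\<Sum>a\<in>S\<inter>Z. c a)) \<le> r S" if "finite S" for S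
  proof -
    have "L = (\<Sum>\<^sub>\<infinity>a\<in>(S \<inter> Z) \<union> (Z - S). c a)" unfolding L_def
      by (rule arg_cong[where f="infsum c"]) auto
    also have "\<dots> = (\<Sum>\<^sub>\<infinity>a\<in>S \<inter> Z. c a) + (\<Sum>\<^sub>\<infinity>a\<in>Z - S. c a)"
      by (rule infsum_Un_disjoint) (auto intro: sum_c)
    also have "(\<Sum>\<^sub>\<infinity>a\<in>S \<inter> Z. c a) = (\<Sum>a\<in>S \<inter> Z. c a)" using that by simp
    finally have "norm (L - (\<Sum>a\<in>S\<inter>Z. c a)) = norm (\<Sum>\<^sub>\<infinity>a\<in>Z - S. c a)" by simp
    also have "\<dots> \<le> (\<Sum>\<^sub>\<infinity>a\<in>Z - S. norm (c a))"
      by (rule norm_infsum_bound) (use sumA in simp)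
    also have "\<dots> \<le> r S" unfolding r_def
      by (rule infsum_mono_neutral) (auto intro: sumA)
    finally show ?thesis .
  qed
  have cont: "continuous_on A (\<lambda>t. \<Sum>a\<in>S. c a * e a t)" for S A
    unfolding e_def by (intro continuous_intros)
  have int: "F integrable_on {0..T}" for T
    unfolding cbox_interval[symmetric]
  proof (rule integrable_uniform_limit)
    fix \<epsilon> :: real assume "\<epsilon> > 0"
    then obtain S where S: "finite S" "r S < \<epsilon>" using small by blast
    show "\<exists>g. (\<forall>x\<in>cbox 0 T. norm (F x - g x) \<le> \<epsilon>) \<and> g integrable_on cbox 0 T"
      by (rule exI[of _ "\<lambda>t. \<Sum>a\<in>S. c a * e a t"])
         (use S in \<open>auto simp: cbox_interval intro!: integrable_continuous_real cont
              intro: order_trans[OF tail less_imp_le]\<close>)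
  qed
  have fin: "((\<lambda>T. integral {0..T} (\<lambda>t. \<Sum>a\<in>S. c a * e a t) / complex_of_real T)
              \<longlongrightarrow> (\<Sum>a\<in>S\<inter>Z. c a)) at_top" if "finite S" for S
  proof -
    have ie: "(\<lambda>t. c a * e a t) integrable_on {0..T}" for a T
      using cont[of "{0..T}" "{a}"] by (auto intro: integrable_continuous_real)
    have eq: "integral {0..T} (\<lambda>t. \<Sum>a\<in>S. c a * e a t) / complex_of_real T =
          (\<Sum>a\<in>S. c a * (integral {0..T} (e a) / complex_of_real T))" for T
    proof -
      have "integral {0..T} (\<lambda>t. \<Sum>a\<in>S. c a * e a t) = (\<Sum>a\<in>S. integral {0..T} (\<lambda>t. c a * e a t))"
        by (rule integral_sum) (use ie that in auto)
      also have "\<dots> = (\<Sum>a\<in>S. c a * integral {0..T} (e a))"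
        by (simp add: integral_mult_right)
      finally show ?thesis by (simp add: sum_divide_distrib)
    qed
    have "((\<lambda>T. \<Sum>a\<in>S. c a * (integral {0..T} (e a) / complex_of_real T))
              \<longlongrightarrow> (\<Sum>a\<in>S. c a * (if w a = 0 then 1 else 0))) at_top"
      unfolding e_def by (intro tendsto_intros exp_avg)
    moreover have "(\<Sum>a\<in>S. c a * (if w a = 0 then 1 else 0)) = (\<Sum>a\<in>S\<inter>Z. c a)"
      using that by (simp add: Z_def sum.inter_restrict if_distrib cong: if_cong)
    ultimately show ?thesis by (simp add: eq)
  qed
  have lim: "((\<lambda>T. integral {0..T} F / complex_of_real T) \<longlongrightarrow> L) at_top"
  proof (rule tendstoI)
    fix \<epsilon> :: real assume ep: "\<epsilon> > 0"
    then obtain S where S: "finite S" "r S < \<epsilon> / 3" using small[of "\<epsilon>/3"] by auto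
    have ev: "eventually (\<lambda>T. dist (integral {0..T} (\<lambda>t. \<Sum>a\<in>S. c a * e a t) / complex_of_real T)
               (\<Sum>a\<in>S\<inter>Z. c a) < \<epsilon> / 3) at_top"
      using tendstoD[OF fin[OF S(1)], of "\<epsilon>/3"] ep by simp
    show "eventually (\<lambda>T. dist (integral {0..T} F / complex_of_real T) L < \<epsilon>) at_top"
      using ev eventually_gt_at_top[of "0::real"]
    proof eventually_elim
      case (elim T)
      define G where "G t = (\<Sum>a\<in>S. c a * e a t)" for t
      have iG: "G integrable_on {0..T}"
        unfolding G_def by (intro integrable_continuous_real cont)
      have "norm (integral {0..T} (\<lambda>t. F t - G t)) \<le> r S * Henstock_Kurzweil_Integration.content (cbox 0 T)"
        by (rule has_integral_bound[where f="\<lambda>t. F t - G t"])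
           (use tail S iG[unfolded G_def] int in \<open>auto simp: G_def cbox_interval r_def intro!: infsum_nonneg integrable_integral integrable_diff\<close>)
      also have "Henstock_Kurzweil_Integration.content (cbox 0 T) = T" using elim by (simp add: cbox_interval)
      finally have "norm (integral {0..T} F - integral {0..T} G) \<le> r S * T"
        using int iG by (simp add: integral_diff)
      then have a: "norm (integral {0..T} F / complex_of_real T - integral {0..T} G / complex_of_real T) \<le> r S"
        using elim by (simp add: diff_divide_distrib[symmetric] norm_divide divide_le_eq)
      have b: "norm (L - (\<Sum>a\<in>S\<inter>Z. c a)) \<le> r S" using Ltail S by blast
      have "dist (integral {0..T} F / complex_of_real T) L \<le>
             norm (integral {0..T} F / complex_of_real T - integral {0..T} G / complex_of_real T)
             + dist (integral {0..T} G / complex_of_real T) (\<Sum>a\<in>S\<inter>Z. c a)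
             + norm (L - (\<Sum>a\<in>S\<inter>Z. c a))"
      proof -
        have tri: "norm (p + q + s) \<le> norm p + norm q + norm s" for p q s :: complex
          by (rule order_trans[OF norm_triangle_ineq add_right_mono[OF norm_triangle_ineq]])
        have "dist (integral {0..T} F / complex_of_real T) L = norm (
             (integral {0..T} F / complex_of_real T - integral {0..T} G / complex_of_real T)
             + (integral {0..T} G / complex_of_real T - (\<Sum>a\<in>S\<inter>Z. c a))
             + ((\<Sum>a\<in>S\<inter>Z. c a) - L))" by (simp add: dist_norm)
        also note tri
        finally show ?thesis by (simp add: dist_norm norm_minus_commute)
      qed
      also have "\<dots> < \<epsilon>" using a b elim S unfolding G_def by linarith
      finally show ?case .
    qed
  qed
  have Feq: "(\<lambda>t. \<Sum>\<^sub>\<infinity>a. c a * exp (-\<i> * complex_of_real (w a * t))) = F"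
    by (rule ext) (simp add: F_def e_def)
  show ?thesis
    unfolding has_time_average_def Feq using int lim
    by (simp add: L_def Z_def)
qed


lemma density_pos:
  assumes "density_matrix \<rho>" "finite F"
  shows "Im (\<Sum>k\<in>F. \<Sum>l\<in>F. cnj (x k) * \<rho> k l * x l) = 0"
    "Re (\<Sum>k\<in>F. \<Sum>l\<in>F. cnj (x k) * \<rho> k l * x l) \<ge> 0"
  using assms(1)[unfolded density_matrix_def, THEN conjunct2, THEN conjunct1, rule_format, OF assms(2)]
  by auto

lemma density_diag:
  assumes "density_matrix \<rho>"
  shows "\<rho> k k = complex_of_real (Re (\<rho> k k))" "Re (\<rho> k k) \<ge> 0"
proof -
  have "Im (\<Sum>a\<in>{k}. \<Sum>b\<in>{k}. cnj ((\<lambda>_. 1) a) * \<rho> a b * (\<lambda>_. 1) b) = 0 \<and>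
        Re (\<Sum>a\<in>{k}. \<Sum>b\<in>{k}. cnj ((\<lambda>_. 1) a) * \<rho> a b * (\<lambda>_. 1) b) \<ge> 0"
    using density_pos[OF assms, of "{k}" "\<lambda>_. 1"] by auto
  then show "\<rho> k k = complex_of_real (Re (\<rho> k k))" "Re (\<rho> k k) \<ge> 0"
    by (auto simp: complex_eq_iff)
qed

lemma density_offdiag:
  assumes dm: "density_matrix \<rho>"
  shows "(cmod (\<rho> k l))\<^sup>2 \<le> Re (\<rho> k k) * Re (\<rho> l l)"
proof (cases "k = l")
  case True
  have "cmod (\<rho> l l) = Re (\<rho> l l)"
    using density_diag[OF dm, of l] by (metis norm_of_real abs_of_nonneg)
  then show ?thesis using True by (simp add: power2_eq_square)
next
  case False
  define a where "a = Re (\<rho> k k)"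
  define b where "b = Re (\<rho> l l)"
  define z where "z = \<rho> k l"
  have ha: "\<rho> k k = complex_of_real a" "a \<ge> 0" using density_diag[OF dm, of k] by (auto simp: a_def)
  have hb: "\<rho> l l = complex_of_real b" "b \<ge> 0" using density_diag[OF dm, of l] by (auto simp: b_def)
  have herm: "\<forall>k l. \<rho> k l = cnj (\<rho> l k)" using dm[unfolded density_matrix_def] by (rule conjunct1)
  have hz: "\<rho> l k = cnj z" unfolding z_def by (rule herm[rule_format])
  have pos: "Re (\<Sum>i\<in>{k,l}. \<Sum>j\<in>{k,l}. cnj (x i) * \<rho> i j * x j) \<ge> 0" for x
    using density_pos[OF dm, of "{k,l}" x] by auto
  have expand: "(\<Sum>i\<in>{k,l}. \<Sum>j\<in>{k,l}. cnj (x i) * \<rho> i j * x j) =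
      cnj (x k) * complex_of_real a * x k + cnj (x k) * z * x l + cnj (x l) * cnj z * x k
      + cnj (x l) * complex_of_real b * x l" for x
    using False by (simp add: ha hb hz z_def algebra_simps)
  have zz: "z * cnj z = complex_of_real ((cmod z)\<^sup>2)" by (metis complex_norm_square of_real_power)
  show ?thesis
  proof (cases "b > 0")
    case True
    define x where "x = (\<lambda>i. if i = k then complex_of_real b else - cnj z)"
    have "(\<Sum>i\<in>{k,l}. \<Sum>j\<in>{k,l}. cnj (x i) * \<rho> i j * x j) =
          complex_of_real (b * (a * b - (cmod z)\<^sup>2))"
      unfolding expand using False
      by (simp add: x_def algebra_simps zz, (simp add: algebra_simps power2_eq_square)?)
    then have "b * (a * b - (cmod z)\<^sup>2) \<ge> 0" using pos[of x] by simp
    then show ?thesis using True by (simp add: a_def b_def z_def zero_le_mult_iff)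
  next
    case False
    then have b0: "b = 0" using hb by simp
    define x where "x = (\<lambda>i. if i = k then - z else complex_of_real (a + 1))"
    have "(\<Sum>i\<in>{k,l}. \<Sum>j\<in>{k,l}. cnj (x i) * \<rho> i j * x j) =
          complex_of_real ((cmod z)\<^sup>2 * (- a - 2))"
      unfolding expand using \<open>k \<noteq> l\<close> b0
      by (simp add: x_def algebra_simps zz, (simp add: algebra_simps power2_eq_square)?)
    then have "(cmod z)\<^sup>2 * (- a - 2) \<ge> 0" using pos[of x] by simp
    moreover have "- a - 2 < 0" using ha(2) by simp
    ultimately have "(cmod z)\<^sup>2 \<le> 0" by (simp add: zero_le_mult_iff)
    then show ?thesis using ha hb by (simp add: a_def b_def z_def)
  qed
qed


lemma prod_summable_real:
  fixes f :: "'a \<Rightarrow> real" and g :: "'b \<Rightarrow> real"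
  assumes "f summable_on UNIV" "g summable_on UNIV" "\<And>x. f x \<ge> 0" "\<And>y. g y \<ge> 0"
  shows "(\<lambda>(x,y). f x * g y) summable_on UNIV"
proof -
  have "(\<lambda>(x,y). f x * g y) summable_on Sigma UNIV (\<lambda>_. UNIV)"
  proof (rule summable_on_SigmaI[where g="\<lambda>x. f x * infsum g UNIV"])
    show "((\<lambda>y. case (x, y) of (x, y) \<Rightarrow> f x * g y) has_sum f x * infsum g UNIV) UNIV" for x
      using assms(2) by (simp add: has_sum_cmult_right)
    show "(\<lambda>x. f x * infsum g UNIV) summable_on UNIV"
      using assms(1) by (rule summable_on_cmult_left)
  qed (use assms in auto)
  then show ?thesis by simp
qed

lemma norm_prod_summable:
  fixes f :: "'a \<Rightarrow> complex" and g :: "'b \<Rightarrow> complex"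
  assumes "(\<lambda>x. norm (f x)) summable_on UNIV" "(\<lambda>y. norm (g y)) summable_on UNIV"
  shows "(\<lambda>z. norm (f (fst z) * g (snd z))) summable_on UNIV"
proof -
  have "(\<lambda>(x,y). norm (f x) * norm (g y)) summable_on UNIV"
    by (rule prod_summable_real) (use assms in auto)
  then show ?thesis by (simp add: norm_mult split_def)
qed

lemma infsum_prod_complex:
  fixes f :: "'a \<Rightarrow> complex" and g :: "'b \<Rightarrow> complex"
  assumes "(\<lambda>x. norm (f x)) summable_on UNIV" "(\<lambda>y. norm (g y)) summable_on UNIV"
  shows "infsum f UNIV * infsum g UNIV = (\<Sum>\<^sub>\<infinity>z. f (fst z) * g (snd z))"
proof -
  have s: "(\<lambda>z. f (fst z) * g (snd z)) summable_on Sigma UNIV (\<lambda>_. UNIV)"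
    using abs_summable_summable[OF norm_prod_summable[OF assms]] by simp
  have sf: "f summable_on UNIV" by (rule abs_summable_summable) (use assms in simp)
  have sg: "g summable_on UNIV" by (rule abs_summable_summable) (use assms in simp)
  have "(\<Sum>\<^sub>\<infinity>z\<in>Sigma UNIV (\<lambda>_. UNIV). f (fst z) * g (snd z)) =
        (\<Sum>\<^sub>\<infinity>x. \<Sum>\<^sub>\<infinity>y. f x * g y)"
    using infsum_Sigma_banach[OF s] by simp
  also have "\<dots> = (\<Sum>\<^sub>\<infinity>x. f x * infsum g UNIV)"
    by (simp add: infsum_cmult_right sg)
  also have "\<dots> = infsum f UNIV * infsum g UNIV"
    by (simp add: infsum_cmult_left sf)
  finally show ?thesis by simp
qed

theorem lemma1:
  fixes E E' :: "'i::countable \<Rightarrow> real"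
    and \<rho>0 U :: "'i \<Rightarrow> 'i \<Rightarrow> complex"
    and hbar :: real
  assumes "nondegenerate E" and "nondegenerate E'"
    and "nondegenerate_gaps E" and "nondegenerate_gaps E'"
    and "density_matrix \<rho>0"
    and "unitary_matrix U"
    and "hbar > 0"
  shows "\<forall>m n. has_time_average (rho_evol U E hbar \<rho>0 n) (mu U \<rho>0 n) \<and>
           has_time_average (\<lambda>\<tau>. rho_evol U E hbar \<rho>0 m \<tau> * rho_evol U E hbar \<rho>0 n \<tau>)
             (mu U \<rho>0 m * mu U \<rho>0 n + nu U \<rho>0 m n)"
proof (intro allI conjI)
  fix m n :: 'i
  note dm = assms(5)
  have injE: "inj E" using assms(1) by (simp add: nondegenerate_def)
  have gaps: "\<And>k l m n. E k - E l = E m - E n \<Longrightarrow> E k - E l \<noteq> 0 \<Longrightarrow> k = m \<and> l = n"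
    using assms(3) unfolding nondegenerate_gaps_def by blast
  define d where "d k = Re (\<rho>0 k k)" for k
  define p where "p n k = (cmod (U n k))\<^sup>2" for n k
  define c where "c n a = U n (fst a) * cnj (U n (snd a)) * \<rho>0 (fst a) (snd a)" for n a
  define w where "w a = (E (fst a) - E (snd a)) / hbar" for a
  have d0: "d k \<ge> 0" for k using density_diag[OF dm] by (simp add: d_def)
  have dsum: "d summable_on UNIV"
  proof -
    have "((\<lambda>k. \<rho>0 k k) has_sum 1) UNIV" using dm[unfolded density_matrix_def, THEN conjunct2, THEN conjunct2] .
    from has_sum_Re[OF this] show ?thesis unfolding d_def by (auto intro: has_sum_imp_summable)
  qed
  have p0: "p n k \<ge> 0" for n k by (simp add: p_def)
  have psum: "p n summable_on UNIV" for n
  proof -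
    have "((\<lambda>k. U n k * cnj (U n k)) has_sum 1) UNIV"
      using assms(6)[unfolded unitary_matrix_def, THEN conjunct2, rule_format, of n n] by simp
    from has_sum_Re[OF this] have "((\<lambda>k. Re (U n k * cnj (U n k))) has_sum 1) UNIV" by simp
    moreover have "Re (U n k * cnj (U n k)) = p n k" for k
      by (simp add: p_def complex_mult_cnj cmod_def)
    ultimately show ?thesis by (auto intro: has_sum_imp_summable)
  qed
  have cbound: "norm (c n a) \<le> (p n (fst a) * d (snd a) + p n (snd a) * d (fst a)) / 2" for n a
  proof -
    define u where "u = cmod (U n (fst a))"
    define v where "v = cmod (U n (snd a))"
    define r where "r = cmod (\<rho>0 (fst a) (snd a))"
    define X where "X = u\<^sup>2 * d (snd a)"
    define Y where "Y = v\<^sup>2 * d (fst a)"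
    have r2: "r\<^sup>2 \<le> d (fst a) * d (snd a)" using density_offdiag[OF dm] by (simp add: r_def d_def)
    have X0: "X \<ge> 0" "Y \<ge> 0" using d0 by (auto simp: X_def Y_def)
    have "(u * v * r)\<^sup>2 \<le> X * Y"
    proof -
      have "(u * v * r)\<^sup>2 = u\<^sup>2 * v\<^sup>2 * r\<^sup>2" by (simp add: power_mult_distrib)
      also have "\<dots> \<le> u\<^sup>2 * v\<^sup>2 * (d (fst a) * d (snd a))"
        using r2 by (intro mult_left_mono) auto
      finally show ?thesis by (simp add: X_def Y_def algebra_simps)
    qed
    then have "(2 * (u * v * r))\<^sup>2 \<le> (X + Y)\<^sup>2"
    proof -
      assume P: "(u * v * r)\<^sup>2 \<le> X * Y"
      have "(2 * (u * v * r))\<^sup>2 = 4 * (u * v * r)\<^sup>2" by (simp add: power2_eq_square)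
      also have "\<dots> \<le> 4 * (X * Y)" using P by simp
      also have "\<dots> \<le> (X - Y)\<^sup>2 + 4 * (X * Y)" by simp
      also have "\<dots> = (X + Y)\<^sup>2" by (simp add: power2_eq_square algebra_simps)
      finally show ?thesis .
    qed
    then have "2 * (u * v * r) \<le> X + Y" by (rule power2_le_imp_le) (use X0 in simp)
    then show ?thesis
      by (simp add: c_def norm_mult u_def v_def r_def X_def Y_def p_def)
  qed
  have cabs: "(\<lambda>a. norm (c n a)) summable_on UNIV" for n
  proof (rule summable_on_comparison_test)
    have "(\<lambda>(k,l). p n k * d l) summable_on UNIV"
      by (rule prod_summable_real) (use psum dsum p0 d0 in auto)
    moreover have "(\<lambda>(k,l). d k * p n l) summable_on UNIV"
      by (rule prod_summable_real) (use psum dsum p0 d0 in auto)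
    ultimately have "(\<lambda>a. (case a of (k,l) \<Rightarrow> p n k * d l) + (case a of (k,l) \<Rightarrow> d k * p n l)) summable_on UNIV"
      by (rule summable_on_add)
    then have "(\<lambda>a. ((case a of (k,l) \<Rightarrow> p n k * d l) + (case a of (k,l) \<Rightarrow> d k * p n l)) * (1/2)) summable_on UNIV"
      by (rule summable_on_cmult_left)
    then show "(\<lambda>a. (p n (fst a) * d (snd a) + p n (snd a) * d (fst a)) / 2) summable_on UNIV"
      by (simp add: case_prod_beta mult.commute)
  qed (use cbound in auto)
  have evol: "rho_evol U E hbar \<rho>0 n = (\<lambda>t. \<Sum>\<^sub>\<infinity>a. c n a * exp (-\<i> * complex_of_real (w a * t)))" for n
    unfolding rho_evol_def
    by (rule ext, rule infsum_cong) (auto simp: c_def w_def split: prod.splits)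
  have wz: "w a = 0 \<longleftrightarrow> fst a = snd a" for a
    using assms(7) injE by (auto simp: w_def inj_eq)
  have sqU: "U n x * cnj (U n x) = complex_of_real ((cmod (U n x))\<^sup>2)" for n x
    by (metis complex_norm_square of_real_power)
  have diag: "(\<Sum>\<^sub>\<infinity>a\<in>{a. w a = 0}. c n a) = mu U \<rho>0 n" for n
  proof -
    have bij: "bij_betw (\<lambda>k. (k,k)) UNIV {a. w a = 0}"
      unfolding bij_betw_def
    proof
      show "inj_on (\<lambda>k. (k,k)) UNIV" by (auto simp: inj_on_def)
      show "range (\<lambda>k. (k,k)) = {a. w a = 0}"
      proof (intro equalityI subsetI)
        fix a assume "a \<in> {a. w a = 0}"
        then have "fst a = snd a" by (simp add: wz)
        then have "a = (fst a, fst a)" by (simp add: prod_eq_iff)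
        then show "a \<in> range (\<lambda>k. (k,k))" by (rule range_eqI)
      qed (auto simp: wz)
    qed
    have "(\<Sum>\<^sub>\<infinity>a\<in>{a. w a = 0}. c n a) = (\<Sum>\<^sub>\<infinity>k. c n (k,k))"
      by (rule infsum_reindex_bij_betw[OF bij, symmetric])
    also have "\<dots> = mu U \<rho>0 n" unfolding mu_def
      by (rule infsum_cong) (simp add: c_def sqU mult.assoc)
    finally show ?thesis .
  qed
  show "has_time_average (rho_evol U E hbar \<rho>0 n) (mu U \<rho>0 n)"
    using avg_general[OF cabs[of n], of w] by (simp add: evol diag)
  show "has_time_average (\<lambda>\<tau>. rho_evol U E hbar \<rho>0 m \<tau> * rho_evol U E hbar \<rho>0 n \<tau>)
             (mu U \<rho>0 m * mu U \<rho>0 n + nu U \<rho>0 m n)"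
  proof -
    define C where "C z = c m (fst z) * c n (snd z)" for z
    define W where "W z = w (fst z) + w (snd z)" for z
    have Cabs: "(\<lambda>z. norm (C z)) summable_on UNIV"
      using norm_prod_summable[OF cabs cabs] by (simp add: C_def)
    have Csum: "C summable_on X" for X
      by (rule summable_on_subset_banach[OF abs_summable_summable]) (use Cabs in auto)
    have prod_eq: "(\<lambda>\<tau>. rho_evol U E hbar \<rho>0 m \<tau> * rho_evol U E hbar \<rho>0 n \<tau>) =
        (\<lambda>t. \<Sum>\<^sub>\<infinity>z. C z * exp (-\<i> * complex_of_real (W z * t)))"
    proof (rule ext)
      fix t
      define e where "e a = exp (-\<i> * complex_of_real (w a * t))" for a
      have ne: "norm (e a) = 1" for a by (simp add: e_def norm_exp_eq_Re)
      have "rho_evol U E hbar \<rho>0 m t * rho_evol U E hbar \<rho>0 n t =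
            (\<Sum>\<^sub>\<infinity>a. c m a * e a) * (\<Sum>\<^sub>\<infinity>b. c n b * e b)"
        by (simp add: evol e_def)
      also have "\<dots> = (\<Sum>\<^sub>\<infinity>z. (c m (fst z) * e (fst z)) * (c n (snd z) * e (snd z)))"
        by (rule infsum_prod_complex) (use cabs in \<open>simp_all add: norm_mult ne\<close>)
      also have "\<dots> = (\<Sum>\<^sub>\<infinity>z. C z * exp (-\<i> * complex_of_real (W z * t)))"
      proof (rule infsum_cong)
        fix z :: "('i \<times> 'i) \<times> ('i \<times> 'i)"
        have "e (fst z) * e (snd z) = exp (-\<i> * complex_of_real (W z * t))"
          by (simp add: e_def W_def exp_add[symmetric] algebra_simps)
        then show "c m (fst z) * e (fst z) * (c n (snd z) * e (snd z)) =
                   C z * exp (-\<i> * complex_of_real (W z * t))"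
          by (simp add: C_def mult_ac)
      qed
      finally show "rho_evol U E hbar \<rho>0 m t * rho_evol U E hbar \<rho>0 n t =
          (\<Sum>\<^sub>\<infinity>z. C z * exp (-\<i> * complex_of_real (W z * t)))" .
    qed
    define h1 where "h1 a = ((fst a, fst a), (snd a, snd a))" for a :: "'i \<times> 'i"
    define h2 where "h2 a = (a, (snd a, fst a))" for a :: "'i \<times> 'i"
    define D where "D = {a :: 'i \<times> 'i. fst a \<noteq> snd a}"
    have Zeq: "{z. W z = 0} = range h1 \<union> h2 ` D"
    proof (intro equalityI subsetI)
      fix z assume "z \<in> {z. W z = 0}"
      then have Wz: "W z = 0" by simp
      obtain k l k' l' where z: "z = ((k,l),(k',l'))" by (metis prod.collapse)
      have eq: "E k - E l = E l' - E k'"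
      proof -
        have "((E k - E l) + (E k' - E l')) / hbar = 0"
          using Wz by (simp add: W_def w_def z add_divide_distrib)
        then have "(E k - E l) + (E k' - E l') = 0" using assms(7) by simp
        then show ?thesis by linarith
      qed
      show "z \<in> range h1 \<union> h2 ` D"
      proof (cases "E k - E l = 0")
        case True
        then have "k = l" "k' = l'" using eq injE by (auto simp: inj_eq)
        then show ?thesis by (auto simp: z h1_def image_def)
      next
        case False
        then have "k = l'" "l = k'" using gaps[OF eq] by auto
        moreover have "k \<noteq> l" using False by auto
        ultimately show ?thesis by (auto simp: z h2_def D_def image_def)
      qed
    next
      fix z assume "z \<in> range h1 \<union> h2 ` D"
      then show "z \<in> {z. W z = 0}" by (auto simp: h1_def h2_def W_def w_def diff_divide_distrib)
    qed
    have disj: "range h1 \<inter> h2 ` D = {}" by (auto simp: h1_def h2_def D_def)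
    have diagmu: "(\<Sum>\<^sub>\<infinity>k. c n (k,k)) = mu U \<rho>0 n" for n
      unfolding mu_def
      by (rule infsum_cong) (simp add: c_def sqU mult.assoc)
    have diagabs: "(\<lambda>k. norm (c n (k,k))) summable_on UNIV" for n
    proof -
      have "(\<lambda>a. norm (c n a)) summable_on range (\<lambda>k. (k,k))"
        by (rule summable_on_subset_banach[OF cabs]) auto
      then show ?thesis by (subst (asm) summable_on_reindex) (auto simp: inj_on_def o_def)
    qed
    have s1: "infsum C (range h1) = mu U \<rho>0 m * mu U \<rho>0 n"
    proof -
      have "infsum C (range h1) = infsum (C \<circ> h1) UNIV"
        by (rule infsum_reindex) (auto simp: inj_on_def h1_def prod_eq_iff)
      also have "\<dots> = (\<Sum>\<^sub>\<infinity>z. c m (fst z, fst z) * c n (snd z, snd z))"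
        by (simp add: C_def h1_def o_def)
      also have "\<dots> = (\<Sum>\<^sub>\<infinity>k. c m (k,k)) * (\<Sum>\<^sub>\<infinity>k. c n (k,k))"
        by (rule infsum_prod_complex[symmetric]) (use diagabs in auto)
      finally show ?thesis by (simp add: diagmu)
    qed
    have s2: "infsum C (h2 ` D) = nu U \<rho>0 m n"
    proof -
      have "infsum C (h2 ` D) = infsum (C \<circ> h2) D"
        by (rule infsum_reindex) (auto simp: inj_on_def h2_def)
      also have "\<dots> = nu U \<rho>0 m n"
        unfolding nu_def
      proof -
        have DD: "{(k, l). k \<noteq> l} = D" by (auto simp: D_def)
        show "infsum (C \<circ> h2) D = (\<Sum>\<^sub>\<infinity>(k, l)\<in>{(k, l). k \<noteq> l}.
            U m k * cnj (U m l) * cnj (U n k) * U n l * complex_of_real ((cmod (\<rho>0 k l))\<^sup>2))"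
          unfolding DD
        proof (rule infsum_cong)
          fix a assume "a \<in> D"
          obtain k l where a: "a = (k,l)" by (metis prod.collapse)
          have herm0: "\<forall>k l. \<rho>0 k l = cnj (\<rho>0 l k)" using dm[unfolded density_matrix_def] by (rule conjunct1)
          have herm: "\<rho>0 l k = cnj (\<rho>0 k l)" by (rule herm0[rule_format])
          have sq: "(complex_of_real (cmod (\<rho>0 k l)))\<^sup>2 = \<rho>0 k l * cnj (\<rho>0 k l)"
            by (metis complex_norm_square of_real_power)
          show "(C \<circ> h2) a = (case a of (k, l) \<Rightarrow>
              U m k * cnj (U m l) * cnj (U n k) * U n l * complex_of_real ((cmod (\<rho>0 k l))\<^sup>2))"
            by (simp add: a C_def h2_def c_def herm sq mult_ac)
        qed
      qed
      finally show ?thesis .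
    qed
    have val: "(\<Sum>\<^sub>\<infinity>z\<in>{z. W z = 0}. C z) = mu U \<rho>0 m * mu U \<rho>0 n + nu U \<rho>0 m n"
      unfolding Zeq by (subst infsum_Un_disjoint) (use Csum disj s1 s2 in auto)
    show ?thesis
      using avg_general[OF Cabs, of W] by (simp only: prod_eq val)
  qed
qed

end
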